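(* Let $0<r<s<\infty$, $\theta\in[0,\frac18)$, and let $f\colon[r,s]\to\mathbb R$ be non-decreasing and right-continuous. Then for every measurable $E\subset[r,s]$ with $\mathscr{L}^{1}(E)<\theta(s-r)$ there exist $r<\tilde r<\tilde s<s$ with $\tilde r,\tilde s\notin E$ such that, for $a\in\{\tilde r,\tilde s\}$, \[ \frac{f(a)-f(\tau)}{a-\tau}\leq\frac{800}{1-8\theta}\frac{f(s)-f(r)}{s-r}\ \text{ for all }\tau\in[r,a),\qquad \frac{f(\tau)-f(a)}{\tau-a}\leq\frac{800}{1-8\theta}\frac{f(s)-f(r)}{s-r}\ \text{ for all }\tau\in(a,s], \] and $(\tilde s-\tilde r)\leq(s-r)\leq8(\tilde s-\tilde r)$. *)

theory Defs
  imports "HOL-Analysis.Analysis"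
begin

end

theory Submission
  imports Defs
begin

lemma core:
  fixes f :: "real \<Rightarrow> real" and r s p q lam :: real and T :: "real set"
  assumes rp: "r < p" and pq: "p < q" and qs: "q < s" and mono: "mono_on {r..s} f"
    and lam: "lam > 0" and T: "open T"
    and bad: "\<forall>x\<in>{p..q}. x \<notin> T \<longrightarrow> isCont f x \<and>
       ((\<exists>\<tau>\<in>{r..<x}. f x - f \<tau> > lam*(x-\<tau>)) \<or> (\<exists>\<tau>\<in>{x<..s}. f \<tau> - f x > lam*(\<tau>-x)))"
  shows "q - p \<le> measure lebesgue (T \<inter> {p..q}) + 2*(f s - f r)/lam"
proof -
  define g where "g t = f t - lam*t" for t
  define gR where "gR x = Sup (g ` {x..s})" for x
  define gL where "gL x = Inf (g ` {r..x})" for x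
  define uR where "uR x = gR x + lam*x" for x
  define uL where "uL x = gL x + lam*x" for x
  have fb: "f r \<le> f t \<and> f t \<le> f s" if "t \<in> {r..s}" for t
    using mono that rp pq qs unfolding mono_on_def by auto
  have fm: "f x \<le> f y" if "x \<in> {r..s}" "y \<in> {r..s}" "x \<le> y" for x y
    using mono that unfolding mono_on_def by auto
  have bddR: "bdd_above (g ` {x..s})" if "r \<le> x" for x
  proof (rule bdd_aboveI2)
    fix t assume "t \<in> {x..s}"
    then show "g t \<le> f s - lam * r" using fb[of t] that lam unfolding g_def
      by (smt (verit, best) atLeastAtMost_iff mult_left_mono)
  qed
  have bddL: "bdd_below (g ` {r..x})" if "x \<le> s" for x
  proof (rule bdd_belowI2)
    fix t assume "t \<in> {r..x}"
    then show "f r - lam * s \<le> g t" using fb[of t] that lam unfolding g_def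
      by (smt (verit, best) atLeastAtMost_iff mult_left_mono)
  qed
  have gR_ge: "g t \<le> gR x" if "r \<le> x" "t \<in> {x..s}" for x t
    unfolding gR_def using bddR[OF that(1)] that(2) by (intro cSup_upper) auto
  have gL_le: "gL x \<le> g t" if "x \<le> s" "t \<in> {r..x}" for x t
    unfolding gL_def using bddL[OF that(1)] that(2) by (intro cInf_lower) auto
  have uR_mono: "uR x \<le> uR y" if "r \<le> x" "x \<le> y" "y \<le> s" for x y
  proof -
    have "gR x \<le> gR y + lam*y - lam*x"
      unfolding gR_def[of x]
    proof (rule cSup_least)
      show "g ` {x..s} \<noteq> {}" using that by auto
      fix z assume "z \<in> g ` {x..s}"
      then obtain t where t: "t \<in> {x..s}" "z = g t" by auto
      show "z \<le> gR y + lam * y - lam * x"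
      proof (cases "y \<le> t")
        case True
        then show ?thesis using gR_ge[of y t] t that lam
          by (smt (verit, best) atLeastAtMost_iff mult_left_mono)
      next
        case False
        have "g t + lam*x \<le> f t" unfolding g_def using False t lam
          by (smt (verit, best) atLeastAtMost_iff mult_left_mono)
        also have "\<dots> \<le> f y" using fm[of t y] False t that by auto
        also have "\<dots> = g y + lam*y" unfolding g_def by simp
        also have "\<dots> \<le> gR y + lam*y" using gR_ge[of y y] that by auto
        finally show ?thesis using t by simp
      qed
    qed
    then show ?thesis unfolding uR_def by simp
  qed
  have uL_mono: "uL x \<le> uL y" if "r \<le> x" "x \<le> y" "y \<le> s" for x y
  proof -
    have "gL x + lam*x - lam*y \<le> gL y"
      unfolding gL_def[of y]
    proof (rule cInf_greatest)
      show "g ` {r..y} \<noteq> {}" using that by auto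
      fix z assume "z \<in> g ` {r..y}"
      then obtain t where t: "t \<in> {r..y}" "z = g t" by auto
      show "gL x + lam*x - lam*y \<le> z"
      proof (cases "t \<le> x")
        case True
        then show ?thesis using gL_le[of x t] t that lam
          by (smt (verit, best) atLeastAtMost_iff mult_left_mono)
      next
        case False
        have "gL x + lam*x \<le> g x + lam*x" using gL_le[of x x] that by auto
        also have "\<dots> = f x" unfolding g_def by simp
        also have "\<dots> \<le> f t" using fm[of x t] False t that by auto
        also have "\<dots> \<le> g t + lam*y" unfolding g_def using t lam
          by (smt (verit, best) atLeastAtMost_iff mult_left_mono)
        finally show ?thesis using t by simp
      qed
    qed
    then show ?thesis unfolding uL_def by simp
  qed
  have uR_end: "uR q - uR p \<le> f s - f r"
  proof -
    have "uR q \<le> uR s" using uR_mono[of q s] rp pq qs by auto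
    moreover have "gR s = g s" unfolding gR_def by simp
    moreover have "uR r \<le> uR p" using uR_mono[of r p] rp pq qs by auto
    moreover have "g r \<le> gR r" using gR_ge[of r r] rp pq qs by auto
    ultimately show ?thesis unfolding uR_def g_def by simp
  qed
  have uL_end: "uL q - uL p \<le> f s - f r"
  proof -
    have "uL q \<le> uL s" using uL_mono[of q s] rp pq qs by auto
    moreover have "gL s \<le> g s" using gL_le[of s s] rp pq qs by auto
    moreover have "uL r \<le> uL p" using uL_mono[of r p] rp pq qs by auto
    moreover have "gL r = g r" unfolding gL_def by simp
    ultimately show ?thesis unfolding uL_def g_def by simp
  qed
  have gcont: "isCont g x" if "isCont f x" for x
    unfolding g_def using that by (intro continuous_intros)
  have locR: "\<exists>d>0. \<forall>y\<in>{r..s}. \<bar>y-x\<bar> < d \<longrightarrow> gR y = gR x"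
    if x: "x \<in> {r<..<s}" "isCont f x" and tau: "\<tau> \<in> {x<..s}" "g \<tau> > g x" for x \<tau>
  proof -
    obtain d1 where d1: "d1 > 0" "\<forall>y. \<bar>y - x\<bar> < d1 \<longrightarrow> \<bar>g y - g x\<bar> < g \<tau> - g x"
      using gcont[OF x(2)] tau(2) unfolding continuous_at_eps_delta dist_real_def
      by (metis diff_gt_0_iff_gt)
    define d where "d = min d1 (\<tau> - x)"
    have "d > 0" using d1 tau unfolding d_def by auto
    moreover have "gR y = gR x" if y: "y \<in> {r..s}" "\<bar>y-x\<bar> < d" for y
    proof (cases "y \<le> x")
      case True
      have "gR x \<le> gR y" unfolding gR_def using y True x bddR[of y]
        by (intro cSup_subset_mono) auto
      moreover have "gR y \<le> gR x" unfolding gR_def[of y]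
      proof (rule cSup_least)
        show "g ` {y..s} \<noteq> {}" using y by auto
        fix z assume "z \<in> g ` {y..s}"
        then obtain t where t: "t \<in> {y..s}" "z = g t" by auto
        show "z \<le> gR x"
        proof (cases "x \<le> t")
          case True then show ?thesis using gR_ge[of x t] t x by auto
        next
          case False
          then have "\<bar>t - x\<bar> < d1" using t y True d_def by auto
          then have "g t < g \<tau>" using d1 by auto
          then show ?thesis using gR_ge[of x \<tau>] t x tau by auto
        qed
      qed
      ultimately show ?thesis by simp
    next
      case False
      have "gR y \<le> gR x" unfolding gR_def using y False x bddR[of x]
        by (intro cSup_subset_mono) auto
      moreover have "gR x \<le> gR y" unfolding gR_def[of x]
      proof (rule cSup_least)
        show "g ` {x..s} \<noteq> {}" using x by auto
        fix z assume "z \<in> g ` {x..s}"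
        then obtain t where t: "t \<in> {x..s}" "z = g t" by auto
        show "z \<le> gR y"
        proof (cases "y \<le> t")
          case True then show ?thesis using gR_ge[of y t] t y by auto
        next
          case False
          then have "\<bar>t - x\<bar> < d1" using t y d_def by auto
          then have "g t < g \<tau>" using d1 by auto
          moreover have "\<tau> \<in> {y..s}" using y tau d_def by auto
          ultimately show ?thesis using gR_ge[of y \<tau>] t y by auto
        qed
      qed
      ultimately show ?thesis by simp
    qed
    ultimately show ?thesis by blast
  qed
  have locL: "\<exists>d>0. \<forall>y\<in>{r..s}. \<bar>y-x\<bar> < d \<longrightarrow> gL y = gL x"
    if x: "x \<in> {r<..<s}" "isCont f x" and tau: "\<tau> \<in> {r..<x}" "g \<tau> < g x" for x \<tau>
  proof -
    obtain d1 where d1: "d1 > 0" "\<forall>y. \<bar>y - x\<bar> < d1 \<longrightarrow> \<bar>g y - g x\<bar> < g x - g \<tau>"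
      using gcont[OF x(2)] tau(2) unfolding continuous_at_eps_delta dist_real_def
      by (metis diff_gt_0_iff_gt)
    define d where "d = min d1 (x - \<tau>)"
    have "d > 0" using d1 tau unfolding d_def by auto
    moreover have "gL y = gL x" if y: "y \<in> {r..s}" "\<bar>y-x\<bar> < d" for y
    proof (cases "x \<le> y")
      case True
      have "gL y \<le> gL x" unfolding gL_def using y True x bddL[of y]
        by (intro cInf_superset_mono) auto
      moreover have "gL x \<le> gL y" unfolding gL_def[of y]
      proof (rule cInf_greatest)
        show "g ` {r..y} \<noteq> {}" using y by auto
        fix z assume "z \<in> g ` {r..y}"
        then obtain t where t: "t \<in> {r..y}" "z = g t" by auto
        show "gL x \<le> z"
        proof (cases "t \<le> x")
          case True then show ?thesis using gL_le[of x t] t x by auto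
        next
          case False
          then have "\<bar>t - x\<bar> < d1" using t y True d_def by auto
          then have "g t > g \<tau>" using d1 by auto
          then show ?thesis using gL_le[of x \<tau>] t x tau by auto
        qed
      qed
      ultimately show ?thesis by simp
    next
      case False
      have "gL x \<le> gL y" unfolding gL_def using y False x bddL[of x]
        by (intro cInf_superset_mono) auto
      moreover have "gL y \<le> gL x" unfolding gL_def[of x]
      proof (rule cInf_greatest)
        show "g ` {r..x} \<noteq> {}" using x by auto
        fix z assume "z \<in> g ` {r..x}"
        then obtain t where t: "t \<in> {r..x}" "z = g t" by auto
        show "gL y \<le> z"
        proof (cases "t \<le> y")
          case True then show ?thesis using gL_le[of y t] t y by auto
        next
          case False
          then have "\<bar>t - x\<bar> < d1" using t y d_def by auto
          then have "g t > g \<tau>" using d1 by auto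
          moreover have "\<tau> \<in> {r..y}" using y tau d_def by auto
          ultimately show ?thesis using gL_le[of y \<tau>] t y by auto
        qed
      qed
      ultimately show ?thesis by simp
    qed
    ultimately show ?thesis by blast
  qed

  have gauge_ex: "\<forall>x. \<exists>d>0. x \<in> {p..q} \<longrightarrow> (ball x d \<subseteq> T \<or>
      (\<forall>y\<in>{r..s}. \<bar>y-x\<bar> < d \<longrightarrow> gR y = gR x) \<or> (\<forall>y\<in>{r..s}. \<bar>y-x\<bar> < d \<longrightarrow> gL y = gL x))"
  proof
    fix x
    show "\<exists>d>0. x \<in> {p..q} \<longrightarrow> (ball x d \<subseteq> T \<or>
      (\<forall>y\<in>{r..s}. \<bar>y-x\<bar> < d \<longrightarrow> gR y = gR x) \<or> (\<forall>y\<in>{r..s}. \<bar>y-x\<bar> < d \<longrightarrow> gL y = gL x))"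
    proof (cases "x \<in> {p..q}")
      case False then show ?thesis by (intro exI[of _ 1]) auto
    next
      case xin: True
      show ?thesis
      proof (cases "x \<in> T")
        case True
        then obtain d where "d > 0" "ball x d \<subseteq> T" using T open_contains_ball by blast
        then show ?thesis by blast
      next
        case False
        then have c: "isCont f x" and b: "(\<exists>\<tau>\<in>{r..<x}. f x - f \<tau> > lam*(x-\<tau>)) \<or> (\<exists>\<tau>\<in>{x<..s}. f \<tau> - f x > lam*(\<tau>-x))"
          using bad xin by auto
        have xo: "x \<in> {r<..<s}" using xin rp qs by auto
        from b show ?thesis
        proof
          assume "\<exists>\<tau>\<in>{r..<x}. f x - f \<tau> > lam*(x-\<tau>)"
          then obtain \<tau> where "\<tau> \<in> {r..<x}" "g \<tau> < g x" unfolding g_def by (auto simp: algebra_simps)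
          from locL[OF xo c this] show ?thesis by blast
        next
          assume "\<exists>\<tau>\<in>{x<..s}. f \<tau> - f x > lam*(\<tau>-x)"
          then obtain \<tau> where "\<tau> \<in> {x<..s}" "g \<tau> > g x" unfolding g_def by (auto simp: algebra_simps)
          from locR[OF xo c this] show ?thesis by blast
        qed
      qed
    qed
  qed
  then obtain d where d: "\<And>x. d x > 0" "\<And>x. x \<in> {p..q} \<Longrightarrow> (ball x (d x) \<subseteq> T \<or>
      (\<forall>y\<in>{r..s}. \<bar>y-x\<bar> < d x \<longrightarrow> gR y = gR x) \<or> (\<forall>y\<in>{r..s}. \<bar>y-x\<bar> < d x \<longrightarrow> gL y = gL x))"
    by metis
  have "gauge (\<lambda>x. ball x (d x))" using d(1) by (simp add: gauge_def)
  then obtain P where P: "P tagged_division_of (cbox p q)" "(\<lambda>x. ball x (d x)) fine P"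
    using fine_division_exists by blast
  have Pi: "P tagged_division_of {p..q}" using P by simp
  define h where "h = (indicator T :: real \<Rightarrow> real)"
  have pertag: "Henstock_Kurzweil_Integration.content K \<le> integral K h + ((uR (Sup K) - uR (Inf K)) + (uL (Sup K) - uL (Inf K)))/lam"
    if xK: "(x,K) \<in> P" for x K
  proof -
    obtain c e where K: "K = cbox c e" using tagged_division_ofD(4)[OF P(1) xK] by blast
    have xK': "x \<in> K" "K \<subseteq> cbox p q" using tagged_division_ofD(2,3)[OF P(1) xK] by auto
    have Kb: "K \<subseteq> ball x (d x)" using P(2) xK unfolding fine_def by auto
    have ce: "c \<le> e" using xK' K by auto
    have Ki: "K = {c..e}" using K by simp
    have SI: "Sup K = e" "Inf K = c" using ce Ki by auto
    have cont: "Henstock_Kurzweil_Integration.content K = e - c" using ce Ki by simp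
    have cein: "p \<le> c" "e \<le> q" using xK' Ki ce by auto
    have xin: "x \<in> {p..q}" using xK' by auto
    have dR: "0 \<le> uR e - uR c" using uR_mono[of c e] cein ce rp qs by auto
    have dL: "0 \<le> uL e - uL c" using uL_mono[of c e] cein ce rp qs by auto
    have inonneg: "0 \<le> integral K h"
    proof (cases "h integrable_on K")
      case True then show ?thesis by (rule integral_nonneg) (auto simp: h_def)
    next
      case False then show ?thesis by (simp add: not_integrable_integral)
    qed
    have cd: "\<bar>c - x\<bar> < d x" "\<bar>e - x\<bar> < d x" "c \<in> {r..s}" "e \<in> {r..s}"
      using Kb Ki ce cein rp qs by (auto simp: dist_real_def subset_iff)
    from d(2)[OF xin] show ?thesis
    proof (elim disjE)
      assume "ball x (d x) \<subseteq> T"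
      then have "K \<subseteq> T" using Kb by auto
      then have "integral K h = integral K (\<lambda>_. 1::real)"
        by (intro integral_cong) (auto simp: h_def)
      also have "\<dots> = Henstock_Kurzweil_Integration.content K" using Ki by simp
      finally show ?thesis using dR dL lam SI by (simp add: divide_nonneg_pos)
    next
      assume "\<forall>y\<in>{r..s}. \<bar>y-x\<bar> < d x \<longrightarrow> gR y = gR x"
      then have "gR e = gR c" using cd by metis
      then have "uR e - uR c = lam * (e - c)" unfolding uR_def by (simp add: algebra_simps)
      then have "(uR e - uR c)/lam = e - c" using lam by simp
      moreover have "0 \<le> (uL e - uL c)/lam" using dL lam by simp
      ultimately show ?thesis using inonneg SI cont by (simp add: add_divide_distrib)
    next
      assume "\<forall>y\<in>{r..s}. \<bar>y-x\<bar> < d x \<longrightarrow> gL y = gL x"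
      then have "gL e = gL c" using cd by metis
      then have "uL e - uL c = lam * (e - c)" unfolding uL_def by (simp add: algebra_simps)
      then have "(uL e - uL c)/lam = e - c" using lam by simp
      moreover have "0 \<le> (uR e - uR c)/lam" using dR lam by simp
      ultimately show ?thesis using inonneg SI cont by (simp add: add_divide_distrib)
    qed
  qed
  have "q - p = (\<Sum>(x,K)\<in>P. Henstock_Kurzweil_Integration.content K)"
    using additive_content_tagged_division[OF P(1)] pq by simp
  also have "\<dots> \<le> (\<Sum>(x,K)\<in>P. integral K h + ((uR (Sup K) - uR (Inf K)) + (uL (Sup K) - uL (Inf K)))/lam)"
    using pertag by (intro sum_mono) auto
  also have "\<dots> = (\<Sum>(x,K)\<in>P. integral K h) + ((\<Sum>(x,K)\<in>P. uR (Sup K) - uR (Inf K)) + (\<Sum>(x,K)\<in>P. uL (Sup K) - uL (Inf K)))/lam"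
    by (simp add: sum.distrib sum_divide_distrib[symmetric] case_prod_unfold)
  also have "(\<Sum>(x,K)\<in>P. uR (Sup K) - uR (Inf K)) = uR q - uR p"
    using additive_tagged_division_1[OF _ Pi] pq by simp
  also have "(\<Sum>(x,K)\<in>P. uL (Sup K) - uL (Inf K)) = uL q - uL p"
    using additive_tagged_division_1[OF _ Pi] pq by simp
  also have "(\<Sum>(x,K)\<in>P. integral K h) = integral (cbox p q) h"
  proof -
    have "T \<inter> cbox p q \<in> lmeasurable"
      using T by (subst Int_commute, intro fmeasurable_Int_fmeasurable) (auto simp: borel_open)
    then have "h integrable_on cbox p q" unfolding h_def by (simp add: integrable_on_indicator)
    then show ?thesis using integral_combine_tagged_division_topdown[OF _ P(1)] by metis
  qed
  also have "integral (cbox p q) h = measure lebesgue (T \<inter> {p..q})"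
  proof -
    have "T \<inter> cbox p q \<in> lmeasurable"
      using T by (subst Int_commute, intro fmeasurable_Int_fmeasurable) (auto simp: borel_open)
    moreover have "integral (cbox p q) h = integral (T \<inter> cbox p q) (\<lambda>x. 1::real)"
      unfolding h_def indicator_def of_bool_def using integral_restrict_Int[of "cbox p q" T "\<lambda>x. 1::real"]
      by simp
    ultimately show ?thesis by (simp add: lmeasure_integral)
  qed
  finally show ?thesis using uR_end uL_end lam
    by (smt (verit, best) divide_right_mono)
qed

theorem lemma3p5:
  fixes f :: "real \<Rightarrow> real" and r s \<theta> :: real and E :: "real set"
  assumes "0 < r" and "r < s"
    and "0 \<le> \<theta>" and "\<theta> < 1/8"
    and "mono_on {r..s} f"
    and "\<forall>x\<in>{r..<s}. continuous (at x within {x..s}) f"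
    and "E \<in> sets lebesgue" and "E \<subseteq> {r..s}"
    and "measure lebesgue E < \<theta> * (s - r)"
  shows "\<exists>rt st. r < rt \<and> rt < st \<and> st < s \<and> rt \<notin> E \<and> st \<notin> E \<and>
    (\<forall>a\<in>{rt, st}.
       (\<forall>\<tau>\<in>{r..<a}. (f a - f \<tau>) / (a - \<tau>) \<le> 800 / (1 - 8*\<theta>) * ((f s - f r) / (s - r))) \<and>
       (\<forall>\<tau>\<in>{a<..s}. (f \<tau> - f a) / (\<tau> - a) \<le> 800 / (1 - 8*\<theta>) * ((f s - f r) / (s - r)))) \<and>
    st - rt \<le> s - r \<and> s - r \<le> 8 * (st - rt)"
proof -
  note rs = assms(2) and th = assms(3,4) and mono = assms(5) and Em = assms(7,8,9)
  define L where "L = s - r"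
  define C where "C = 800 / (1 - 8*\<theta>)"
  define lam where "lam = C * ((f s - f r) / L)"
  define good where "good a \<longleftrightarrow> (\<forall>\<tau>\<in>{r..<a}. (f a - f \<tau>) / (a - \<tau>) \<le> lam) \<and>
       (\<forall>\<tau>\<in>{a<..s}. (f \<tau> - f a) / (\<tau> - a) \<le> lam)" for a
  have L: "L > 0" using rs L_def by simp
  have C: "C \<ge> 800"
  proof -
    have "0 < 1 - 8*\<theta>" "1 - 8*\<theta> \<le> 1" using th by auto
    then show ?thesis unfolding C_def by (simp add: le_divide_eq)
  qed
  have frs: "f r \<le> f s" using mono rs unfolding mono_on_def by auto
  have fb: "f r \<le> f t \<and> f t \<le> f s" if "t \<in> {r..s}" for t
    using mono that rs unfolding mono_on_def by auto
  define lam' where "lam' = (if f s = f r then 1 else lam)"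
  have lam'pos: "lam' > 0"
    using frs L C unfolding lam'_def lam_def by (auto intro!: mult_pos_pos divide_pos_pos)
  have lam'b: "2*(f s - f r)/lam' \<le> L/400"
  proof (cases "f s = f r")
    case True then show ?thesis using L by (simp add: lam'_def)
  next
    case False
    then have "f s - f r > 0" using frs by simp
    then have "2*(f s - f r)/lam' = 2*L/C" unfolding lam'_def lam_def using False L C
      by (simp add: field_simps)
    also have "\<dots> \<le> 2*L/800" using C L by (intro divide_left_mono) auto
    finally show ?thesis by simp
  qed
  have lamnn: "0 \<le> lam" unfolding lam_def using C L frs by simp
  define J where "J = {a\<in>{r<..<s}. \<not> isCont f a}"
  have Jc: "countable J" unfolding J_def
    by (rule mono_on_ctble_discont_open) (auto intro: mono_on_subset[OF mono])
  have Jn: "J \<in> null_sets lebesgue"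
    using countable_imp_null_set_lborel[OF Jc] by (rule null_sets_completionI)
  have EJ: "E \<union> J \<in> sets lebesgue" using Em(1) Jn by auto
  obtain T where T: "open T" "E \<union> J \<subseteq> T" "(T - (E \<union> J)) \<in> lmeasurable"
      "emeasure lebesgue (T - (E \<union> J)) < ennreal (L/16)"
    using sets_lebesgue_outer_open[OF EJ, of "L/16"] L by auto
  have mTd: "measure lebesgue (T - (E \<union> J)) < L/16"
  proof -
    have "ennreal (measure lebesgue (T - (E \<union> J))) < ennreal (L/16)"
      using T(3,4) by (simp add: emeasure_eq_measure2)
    then show ?thesis using L by (simp add: ennreal_less_iff)
  qed
  have Efm: "E \<in> lmeasurable"
    using Em by (intro bounded_set_imp_lmeasurable) (auto intro: bounded_subset[of "{r..s}"])
  have mJ: "measure lebesgue J = 0" using Jn by (simp add: measure_eq_0_null_sets)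
  have pick: "\<exists>a\<in>{p..q}. a \<notin> E \<and> good a" if pq: "r < p" "p < q" "q < s" "q - p = L/4" for p q
  proof (rule ccontr)
    assume H: "\<not> (\<exists>a\<in>{p..q}. a \<notin> E \<and> good a)"
    have bad: "\<forall>x\<in>{p..q}. x \<notin> T \<longrightarrow> isCont f x \<and>
       ((\<exists>\<tau>\<in>{r..<x}. f x - f \<tau> > lam'*(x-\<tau>)) \<or> (\<exists>\<tau>\<in>{x<..s}. f \<tau> - f x > lam'*(\<tau>-x)))"
    proof (intro ballI impI)
      fix x assume x: "x \<in> {p..q}" "x \<notin> T"
      then have xE: "x \<notin> E" "x \<notin> J" using T(2) by auto
      then have "isCont f x" using x pq unfolding J_def by auto
      moreover have ng: "\<not> good x" using H x xE by auto
      have "(\<exists>\<tau>\<in>{r..<x}. f x - f \<tau> > lam*(x-\<tau>)) \<or> (\<exists>\<tau>\<in>{x<..s}. f \<tau> - f x > lam*(\<tau>-x))"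
      proof -
        from ng obtain \<tau> where "(\<tau>\<in>{r..<x} \<and> (f x - f \<tau>) / (x - \<tau>) > lam) \<or> (\<tau>\<in>{x<..s} \<and> (f \<tau> - f x) / (\<tau> - x) > lam)"
          unfolding good_def by (auto simp: not_le) blast+
        then show ?thesis
        proof (elim disjE conjE)
          assume "\<tau>\<in>{r..<x}" "(f x - f \<tau>) / (x - \<tau>) > lam"
          then show ?thesis by (intro disjI1 bexI[of _ \<tau>]) (auto simp: pos_less_divide_eq mult.commute)
        next
          assume "\<tau>\<in>{x<..s}" "(f \<tau> - f x) / (\<tau> - x) > lam"
          then show ?thesis by (intro disjI2 bexI[of _ \<tau>]) (auto simp: pos_less_divide_eq mult.commute)
        qed
      qed
      moreover have "f s \<noteq> f r" if "f s = f r"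
      proof -
        from calculation(2) obtain a b where ab: "a \<in> {r..s}" "b \<in> {r..s}" "f a > f b"
          using lamnn x pq
          by (smt (verit, ccfv_SIG) atLeastAtMost_iff atLeastLessThan_iff greaterThanAtMost_iff
              mult_nonneg_nonneg)
        then show ?thesis using fb[OF ab(1)] fb[OF ab(2)] by linarith
      qed
      ultimately show "isCont f x \<and> ((\<exists>\<tau>\<in>{r..<x}. f x - f \<tau> > lam'*(x-\<tau>)) \<or> (\<exists>\<tau>\<in>{x<..s}. f \<tau> - f x > lam'*(\<tau>-x)))"
        unfolding lam'_def by auto
    qed
    have "q - p \<le> measure lebesgue (T \<inter> {p..q}) + 2*(f s - f r)/lam'"
      by (rule core[OF pq(1,2,3) mono lam'pos T(1) bad])
    moreover have "measure lebesgue (T \<inter> {p..q}) \<le> measure lebesgue E + measure lebesgue J + measure lebesgue (T - (E \<union> J))"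
    proof -
      have "measure lebesgue (T \<inter> {p..q}) \<le> measure lebesgue ((E \<union> J) \<union> (T - (E \<union> J)))"
      proof (rule measure_mono_fmeasurable)
        show "T \<inter> {p..q} \<subseteq> E \<union> J \<union> (T - (E \<union> J))" by auto
        show "T \<inter> {p..q} \<in> sets lebesgue" using T(1) by (auto simp: borel_open)
        show "E \<union> J \<union> (T - (E \<union> J)) \<in> lmeasurable"
          using Efm Jn T(3) by (intro fmeasurable.Un) (auto intro: fmeasurableI_null_sets)
      qed
      also have "\<dots> \<le> measure lebesgue (E \<union> J) + measure lebesgue (T - (E \<union> J))"
        using EJ T(3) by (intro measure_Un_le) auto
      also have "measure lebesgue (E \<union> J) \<le> measure lebesgue E + measure lebesgue J"
        using Em(1) Jn by (intro measure_Un_le) auto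
      finally show ?thesis by simp
    qed
    moreover have "\<theta> * L \<le> L/8" using th L by (simp add: mult_right_mono)
    ultimately show False using mTd mJ Em(3) lam'b pq(4) L unfolding L_def[symmetric]
      by linarith
  qed
  obtain rt where rt: "rt \<in> {r + L/8 .. r + 3*L/8}" "rt \<notin> E" "good rt"
  proof -
    have "\<exists>a\<in>{r + L/8 .. r + 3*L/8}. a \<notin> E \<and> good a"
      by (rule pick) (use L in \<open>auto simp: L_def field_simps\<close>)
    then show ?thesis using that by blast
  qed
  obtain st where st: "st \<in> {s - 3*L/8 .. s - L/8}" "st \<notin> E" "good st"
  proof -
    have "\<exists>a\<in>{s - 3*L/8 .. s - L/8}. a \<notin> E \<and> good a"
      by (rule pick) (use L in \<open>auto simp: L_def field_simps\<close>)
    then show ?thesis using that by blast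
  qed
  show ?thesis
  proof (rule exI[of _ rt], rule exI[of _ st], intro conjI)
    show "r < rt" "rt < st" "st < s" "st - rt \<le> s - r" "s - r \<le> 8 * (st - rt)"
      using rt(1) st(1) L unfolding L_def by (auto simp: field_simps)
    show "rt \<notin> E" "st \<notin> E" by (fact rt(2), fact st(2))
    have "good a" if "a \<in> {rt, st}" for a using that rt(3) st(3) by blast
    then show "\<forall>a\<in>{rt, st}.
       (\<forall>\<tau>\<in>{r..<a}. (f a - f \<tau>) / (a - \<tau>) \<le> 800 / (1 - 8*\<theta>) * ((f s - f r) / (s - r))) \<and>
       (\<forall>\<tau>\<in>{a<..s}. (f \<tau> - f a) / (\<tau> - a) \<le> 800 / (1 - 8*\<theta>) * ((f s - f r) / (s - r)))"
      unfolding good_def lam_def C_def L_def by blast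
  qed
qed

end
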